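(* Fix an integer $N \ge 1$. For every rate tuple $(R_1,\dots,R_N)$ with $R_n \ge 0$ and $R_1 + \cdots + R_N < 1$, there exist $\kappa_1,\dots,\kappa_N > 0$ such that the following holds. For positive integers $K_n = K_n(L)$ with $\lim_{L\to\infty} K_n/L = \kappa_n$, let $\underline{x}_1,\dots,\underline{x}_N$ be independent with $\underline{x}_n \sim \mathsf{BF}(L, K_n)$, and let $\underline{y} = \underline{x}_1 \vee \cdots \vee \underline{x}_N$ (componentwise OR). Then for every nonempty $\mathcal{S} \subseteq \{1,\dots,N\}$, with $\bar{\mathcal{S}} = \{1,\dots,N\}\setminus \mathcal{S}$, $$\sum_{n\in\mathcal{S}} R_n < \liminf_{L\to\infty} \frac{1}{L} I(\underline{x}_{\mathcal{S}}; \underline{y} \mid \underline{x}_{\bar{\mathcal{S}}}).$$ That is, Bloom filter channel inputs (with joint decoding) achieve every point of the capacity region $\{\underline{R}: R_1+\cdots+R_N \le 1\}$ of the $N$-user OR multiple-access channel (rates in bits per channel use).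
   Context: The $N$-user OR multiple-access channel has binary inputs $x_1,\dots,x_N \in \{0,1\}$ and output $y = x_1 \vee \cdots \vee x_N$ (Boolean OR), used memorylessly; its capacity region is $\{\underline{R} : R_1 + \cdots + R_N \le 1 \text{ bit per channel use}\}$. A Bloom filter $\mathsf{BF}(L, K)$ is the random binary array in $\{0,1\}^L$ obtained by starting from the all-zero array and letting $K$ hash functions each independently select a uniformly random position in $\{1,\dots,L\}$ and set it to $1$. A length-$L$ Bloom filter is used as a block of $L$ channel inputs; mutual information is in bits, $\underline{x}_{\mathcal{S}} = (\underline{x}_n)_{n\in\mathcal{S}}$, and conditioning on $\underline{x}_{\emptyset}$ is vacuous. *)

theory Defs
  imports "HOL-Probability.Probability"
begin

text \<open>Bloom filter BF(L,K): positions are 0..L-1; an array is a function nat => bool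
  (False outside 0..L-1). Start from all-zero, each of K hashes sets a uniformly
  random position (independently) to 1.\<close>
fun bloom_filter :: "nat \<Rightarrow> nat \<Rightarrow> (nat \<Rightarrow> bool) pmf" where
  "bloom_filter L 0 = return_pmf (\<lambda>i. False)"
| "bloom_filter L (Suc K) =
     bind_pmf (bloom_filter L K) (\<lambda>x. map_pmf (\<lambda>j. x(j := True)) (pmf_of_set {0..<L}))"

definition entropy_pmf :: "'a pmf \<Rightarrow> real" where
  "entropy_pmf p = - (\<Sum>x\<in>set_pmf p. pmf p x * log 2 (pmf p x))"

definition H_rv :: "'w pmf \<Rightarrow> ('w \<Rightarrow> 'a) \<Rightarrow> real" where
  "H_rv P f = entropy_pmf (map_pmf f P)"

definition cond_mutual_info :: "'w pmf \<Rightarrow> ('w \<Rightarrow> 'a) \<Rightarrow> ('w \<Rightarrow> 'b) \<Rightarrow> ('w \<Rightarrow> 'c) \<Rightarrow> real" where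
  "cond_mutual_info P A B C =
     H_rv P (\<lambda>w. (A w, C w)) + H_rv P (\<lambda>w. (B w, C w))
     - H_rv P (\<lambda>w. (A w, B w, C w)) - H_rv P C"

definition bf_inputs :: "nat \<Rightarrow> nat \<Rightarrow> (nat \<Rightarrow> nat \<Rightarrow> nat) \<Rightarrow> (nat \<Rightarrow> nat \<Rightarrow> bool) pmf" where
  "bf_inputs N L K = Pi_pmf {0..<N} (\<lambda>i. False) (\<lambda>n. bloom_filter L (K n L))"

definition or_output :: "nat \<Rightarrow> (nat \<Rightarrow> nat \<Rightarrow> bool) \<Rightarrow> nat \<Rightarrow> bool" where
  "or_output N x = (\<lambda>i. \<exists>n<N. x n i)"

end

theory Submission
  imports Defs "HOL-Real_Asymp.Real_Asymp"
begin


lemma bloom_set: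
  assumes "L \<ge> 1" "x \<in> set_pmf (bloom_filter L k)" "i \<ge> L"
  shows "\<not> x i"
  using assms(2)
proof (induction k arbitrary: x)
  case 0 then show ?case by simp
next
  case (Suc k)
  from Suc.prems obtain y j where "y \<in> set_pmf (bloom_filter L k)" "j < L" "x = y(j := True)"
    using set_pmf_of_set[of "{0..<L}"] assms(1) by (auto simp: set_bind_pmf set_map_pmf)
  then show ?case using Suc.IH assms(1,3) by auto
qed

lemma bloom_finite:
  assumes "L \<ge> 1" shows "finite (set_pmf (bloom_filter L k))"
proof (induction k)
  case 0 then show ?case by simp
next
  case (Suc k)
  have "{0..<L} \<noteq> {}" using assms by auto
  then show ?case using Suc
    by (auto simp: set_bind_pmf set_map_pmf)
qed

lemma bloom_empty_prob:
  assumes "L \<ge> 1" "D \<subseteq> {0..<L}"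
  shows "measure_pmf.prob (bloom_filter L k) {x. \<forall>i\<in>D. \<not> x i} = ((real L - card D) / L) ^ k"
proof (induction k)
  case 0 then show ?case by simp
next
  case (Suc k)
  let ?E = "{x::nat\<Rightarrow>bool. \<forall>i\<in>D. \<not> x i}"
  have ne: "{0..<L} \<noteq> {}" using assms by auto
  have fD: "finite D" using assms(2) finite_subset by blast
  have r: "measure_pmf.prob (pmf_of_set {0..<L}) {j. j \<notin> D} = (real L - card D) / L"
  proof -
    have "{0..<L} \<inter> {j. j \<notin> D} = {0..<L} - D" by auto
    moreover have "card ({0..<L} - D) = L - card D" using assms(2) fD
      by (simp add: card_Diff_subset)
    moreover have "card D \<le> L" using assms(2) card_mono[of "{0..<L}" D] by simp
    ultimately show ?thesis using ne by (simp add: measure_pmf_of_set of_nat_diff)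
  qed
  have "emeasure (measure_pmf (bloom_filter L (Suc k))) ?E
      = (\<integral>\<^sup>+x. emeasure (measure_pmf (pmf_of_set {0..<L})) ((\<lambda>j. x(j := True)) -` ?E) \<partial>(bloom_filter L k))"
    by simp
  also have "\<dots> = (\<integral>\<^sup>+x. ennreal ((real L - card D) / L) * indicator ?E x \<partial>(bloom_filter L k))"
  proof (intro nn_integral_cong)
    fix x :: "nat \<Rightarrow> bool"
    show "emeasure (measure_pmf (pmf_of_set {0..<L})) ((\<lambda>j. x(j := True)) -` ?E)
        = ennreal ((real L - card D) / L) * indicator ?E x"
    proof (cases "x \<in> ?E")
      case True
      then have e: "(\<lambda>j. x(j := True)) -` ?E = {j. j \<notin> D}" by auto
      show ?thesis unfolding e using True r by (simp add: measure_pmf.emeasure_eq_measure)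
    next
      case False
      then have e: "(\<lambda>j. x(j := True)) -` ?E = {}" by auto
      show ?thesis unfolding e using False by simp
    qed
  qed
  also have "\<dots> = ennreal ((real L - card D) / L) * emeasure (measure_pmf (bloom_filter L k)) ?E"
    by (simp add: nn_integral_cmult_indicator)
  also have "\<dots> = ennreal (((real L - card D) / L) ^ Suc k)"
  proof -
    have "card D \<le> L" using assms(2) card_mono[of "{0..<L}" D] by simp
    then have nn: "0 \<le> (real L - card D) / L" by simp
    show ?thesis using Suc nn
      by (simp add: measure_pmf.emeasure_eq_measure ennreal_mult[symmetric] mult.commute)
  qed
  finally have "ennreal (measure_pmf.prob (bloom_filter L (Suc k)) ?E) = ennreal (((real L - card D) / L) ^ Suc k)"
    unfolding measure_pmf.emeasure_eq_measure .
  moreover have "card D \<le> L" using assms(2) card_mono[of "{0..<L}" D] by simp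
  ultimately show ?case by (subst (asm) ennreal_inj) auto
qed



lemma bloom_perm:
  assumes L: "L \<ge> 1" and b: "bij \<sigma>" and im: "\<sigma> ` {0..<L} = {0..<L}"
  shows "map_pmf (\<lambda>x. x \<circ> \<sigma>) (bloom_filter L k) = bloom_filter L k"
proof (induction k)
  case 0 then show ?case by (simp add: o_def)
next
  case (Suc k)
  define \<tau> where "\<tau> = inv \<sigma>"
  have inj\<tau>: "inj \<tau>" unfolding \<tau>_def using b by (simp add: bij_imp_bij_inv bij_is_inj)
  have im\<tau>: "\<tau> ` {0..<L} = {0..<L}"
    unfolding \<tau>_def using b im by (metis bij_is_inj image_inv_f_f)
  have ne: "{0..<L} \<noteq> {}" using L by auto
  have U: "map_pmf \<tau> (pmf_of_set {0..<L}) = pmf_of_set {0..<L}"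
    using map_pmf_of_set_inj[of \<tau> "{0..<L}"] inj\<tau> ne im\<tau> by (simp add: inj_on_subset)
  have upd: "(x(j := True)) \<circ> \<sigma> = (x \<circ> \<sigma>)(\<tau> j := True)" for x :: "nat \<Rightarrow> bool" and j
  proof
    fix i
    have "\<sigma> i = j \<longleftrightarrow> i = \<tau> j" unfolding \<tau>_def using b
      by (metis bij_inv_eq_iff)
    then show "((x(j := True)) \<circ> \<sigma>) i = ((x \<circ> \<sigma>)(\<tau> j := True)) i" by auto
  qed
  have "map_pmf (\<lambda>x. x \<circ> \<sigma>) (bloom_filter L (Suc k))
      = bind_pmf (bloom_filter L k) (\<lambda>x. map_pmf (\<lambda>j. (x(j := True)) \<circ> \<sigma>) (pmf_of_set {0..<L}))"
    by (simp add: map_bind_pmf pmf.map_comp o_def)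
  also have "\<dots> = bind_pmf (bloom_filter L k) (\<lambda>x. map_pmf (\<lambda>j. (x \<circ> \<sigma>)(j := True)) (map_pmf \<tau> (pmf_of_set {0..<L})))"
  proof (intro bind_pmf_cong refl)
    fix x :: "nat \<Rightarrow> bool"
    have "map_pmf (\<lambda>j. (x(j := True)) \<circ> \<sigma>) (pmf_of_set {0..<L}) = map_pmf (\<lambda>j. (x \<circ> \<sigma>)(\<tau> j := True)) (pmf_of_set {0..<L})"
      by (simp only: upd)
    also have "\<dots> = map_pmf (\<lambda>j. (x \<circ> \<sigma>)(j := True)) (map_pmf \<tau> (pmf_of_set {0..<L}))"
      by (simp add: map_pmf_comp)
    finally show "map_pmf (\<lambda>j. (x(j := True)) \<circ> \<sigma>) (pmf_of_set {0..<L}) = map_pmf (\<lambda>j. (x \<circ> \<sigma>)(j := True)) (map_pmf \<tau> (pmf_of_set {0..<L}))" .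
  qed
  also have "\<dots> = bind_pmf (bloom_filter L k) (\<lambda>x. map_pmf (\<lambda>j. (x \<circ> \<sigma>)(j := True)) (pmf_of_set {0..<L}))"
    by (simp add: U)
  also have "\<dots> = bind_pmf (map_pmf (\<lambda>x. x \<circ> \<sigma>) (bloom_filter L k)) (\<lambda>y. map_pmf (\<lambda>j. y(j := True)) (pmf_of_set {0..<L}))"
    by (simp add: bind_map_pmf)
  also have "\<dots> = bloom_filter L (Suc k)" by (simp add: Suc)
  finally show ?case .
qed

lemma bloom_perm_pmf:
  assumes L: "L \<ge> 1" and b: "bij \<sigma>" and im: "\<sigma> ` {0..<L} = {0..<L}"
  shows "pmf (bloom_filter L k) (x \<circ> \<sigma>) = pmf (bloom_filter L k) x"
proof -
  have inj: "inj (\<lambda>x::nat\<Rightarrow>bool. x \<circ> \<sigma>)"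
    by (rule injI) (metis b bij_is_surj fun.map_comp o_id surj_iff)
  have "pmf (bloom_filter L k) (x \<circ> \<sigma>) = pmf (map_pmf (\<lambda>x. x \<circ> \<sigma>) (bloom_filter L k)) (x \<circ> \<sigma>)"
    by (simp add: bloom_perm[OF assms])
  also have "\<dots> = pmf (bloom_filter L k) x" by (rule pmf_map_inj'[OF inj])
  finally show ?thesis .
qed



lemma pmf_map_finite_sum:
  assumes fin: "finite (set_pmf P)"
  shows "pmf (map_pmf f P) y = (\<Sum>x\<in>{x\<in>set_pmf P. f x = y}. pmf P x)"
proof -
  have "pmf (map_pmf f P) y = measure_pmf.prob P (f -` {y})" by (simp add: pmf_map)
  also have "\<dots> = measure_pmf.prob P (f -` {y} \<inter> set_pmf P)" by (simp add: measure_Int_set_pmf)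
  also have "f -` {y} \<inter> set_pmf P = {x\<in>set_pmf P. f x = y}" by auto
  also have "measure_pmf.prob P \<dots> = (\<Sum>x\<in>{x\<in>set_pmf P. f x = y}. pmf P x)"
    using fin by (simp add: measure_measure_pmf_finite)
  finally show ?thesis .
qed

lemma H_rv_sum:
  assumes fin: "finite (set_pmf P)"
  shows "H_rv P f = - (\<Sum>x\<in>set_pmf P. pmf P x * log 2 (pmf (map_pmf f P) (f x)))"
proof -
  let ?q = "pmf (map_pmf f P)"
  have "H_rv P f = - (\<Sum>y\<in>f ` set_pmf P. ?q y * log 2 (?q y))"
    unfolding H_rv_def entropy_pmf_def by (simp add: set_map_pmf)
  also have "(\<Sum>y\<in>f ` set_pmf P. ?q y * log 2 (?q y))
      = (\<Sum>y\<in>f ` set_pmf P. \<Sum>x\<in>{x\<in>set_pmf P. f x = y}. pmf P x * log 2 (?q (f x)))"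
  proof (intro sum.cong refl)
    fix y assume "y \<in> f ` set_pmf P"
    have "?q y * log 2 (?q y) = (\<Sum>x\<in>{x\<in>set_pmf P. f x = y}. pmf P x) * log 2 (?q y)"
      by (simp add: pmf_map_finite_sum[OF fin])
    also have "\<dots> = (\<Sum>x\<in>{x\<in>set_pmf P. f x = y}. pmf P x * log 2 (?q y))"
      by (simp add: sum_distrib_right)
    also have "\<dots> = (\<Sum>x\<in>{x\<in>set_pmf P. f x = y}. pmf P x * log 2 (?q (f x)))"
      by (intro sum.cong refl) auto
    finally show "?q y * log 2 (?q y) = (\<Sum>x\<in>{x\<in>set_pmf P. f x = y}. pmf P x * log 2 (?q (f x)))" .
  qed
  also have "\<dots> = (\<Sum>x\<in>set_pmf P. pmf P x * log 2 (?q (f x)))"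
    by (rule sum.image_gen[OF fin, symmetric])
  finally show ?thesis .
qed

lemma pmf_map_eq_supp:
  assumes "\<And>x'. x' \<in> set_pmf P \<Longrightarrow> f x' = f x \<longleftrightarrow> g x' = g x"
  shows "pmf (map_pmf f P) (f x) = pmf (map_pmf g P) (g x)"
proof -
  have "pmf (map_pmf f P) (f x) = measure_pmf.prob P (f -` {f x})" by (simp add: pmf_map)
  also have "\<dots> = measure_pmf.prob P (g -` {g x})"
    by (rule measure_prob_cong_0) (use assms in \<open>auto simp: set_pmf_eq\<close>)
  also have "\<dots> = pmf (map_pmf g P) (g x)" by (simp add: pmf_map)
  finally show ?thesis .
qed

lemma pmf_map_pos:
  assumes "x \<in> set_pmf P" shows "pmf (map_pmf f P) (f x) > 0"
  using assms by (simp add: pmf_positive set_map_pmf)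

lemma cmi_lower:
  assumes fin: "finite (set_pmf P)"
    and det: "\<And>x x'. x \<in> set_pmf P \<Longrightarrow> x' \<in> set_pmf P \<Longrightarrow> A x = A x' \<Longrightarrow> C x = C x' \<Longrightarrow> B x = B x'"
    and bound: "\<And>x. x \<in> set_pmf P \<Longrightarrow>
        pmf (map_pmf (\<lambda>w. (B w, C w)) P) (B x, C x) * c x \<le> pmf (map_pmf C P) (C x)"
    and c1: "\<And>x. x \<in> set_pmf P \<Longrightarrow> c x \<ge> 1"
  shows "cond_mutual_info P A B C \<ge> (\<Sum>x\<in>set_pmf P. pmf P x * log 2 (c x))"
proof -
  let ?pAC = "\<lambda>x. pmf (map_pmf (\<lambda>w. (A w, C w)) P) (A x, C x)"
  let ?pABC = "\<lambda>x. pmf (map_pmf (\<lambda>w. (A w, B w, C w)) P) (A x, B x, C x)"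
  let ?pBC = "\<lambda>x. pmf (map_pmf (\<lambda>w. (B w, C w)) P) (B x, C x)"
  let ?pC = "\<lambda>x. pmf (map_pmf C P) (C x)"
  have eq: "?pAC x = ?pABC x" if "x \<in> set_pmf P" for x
  proof (rule pmf_map_eq_supp)
    fix x' assume x': "x' \<in> set_pmf P"
    show "(A x', C x') = (A x, C x) \<longleftrightarrow> (A x', B x', C x') = (A x, B x, C x)"
      using det[OF that x'] by auto
  qed
  have "cond_mutual_info P A B C =
     (\<Sum>x\<in>set_pmf P. pmf P x * (log 2 (?pC x) - log 2 (?pBC x)))"
    unfolding cond_mutual_info_def H_rv_sum[OF fin]
    by (simp add: eq sum_subtractf sum_negf algebra_simps)
  also have "\<dots> \<ge> (\<Sum>x\<in>set_pmf P. pmf P x * log 2 (c x))"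
  proof (intro sum_mono mult_left_mono)
    fix x assume x: "x \<in> set_pmf P"
    have p1: "?pBC x > 0" using pmf_map_pos[OF x, of "\<lambda>w. (B w, C w)"] by simp
    have p2: "?pC x > 0" using pmf_map_pos[OF x, of C] by simp
    have "c x \<le> ?pC x / ?pBC x" using bound[OF x] p1 by (simp add: field_simps)
    then have "log 2 (c x) \<le> log 2 (?pC x / ?pBC x)"
      using c1[OF x] by (intro log_le_cancel_iff[THEN iffD2]) auto
    also have "\<dots> = log 2 (?pC x) - log 2 (?pBC x)" using p1 p2 by (simp add: log_divide)
    finally show "log 2 (c x) \<le> log 2 (?pC x) - log 2 (?pBC x)" .
  qed simp
  finally show ?thesis .
qed



lemma bf_set:
  assumes "x \<in> set_pmf (bf_inputs N L K)"
  shows "\<And>n. n \<ge> N \<Longrightarrow> x n = (\<lambda>i. False)"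
    and "\<And>n. n < N \<Longrightarrow> x n \<in> set_pmf (bloom_filter L (K n L))"
  using assms by (auto simp: bf_inputs_def set_Pi_pmf PiE_dflt_def)

lemma bf_finite:
  assumes "L \<ge> 1" shows "finite (set_pmf (bf_inputs N L K))"
  unfolding bf_inputs_def using bloom_finite[OF assms]
  by (subst set_Pi_pmf) auto

lemma bf_set_out:
  assumes "L \<ge> 1" "x \<in> set_pmf (bf_inputs N L K)" "i \<ge> L"
  shows "\<not> x n i"
proof (cases "n < N")
  case True then show ?thesis using bf_set(2)[OF assms(2) True] bloom_set[OF assms(1) _ assms(3)] by blast
next
  case False then show ?thesis using bf_set(1)[OF assms(2)] by simp
qed

lemma bf_empty_prob:
  assumes "L \<ge> 1" "D \<subseteq> {0..<L}" "M \<subseteq> {0..<N}"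
  shows "measure_pmf.prob (bf_inputs N L K) {x. \<forall>n\<in>M. \<forall>i\<in>D. \<not> x n i}
       = (\<Prod>n\<in>M. ((real L - card D) / L) ^ K n L)"
proof -
  let ?B = "\<lambda>n. if n \<in> M then {y::nat\<Rightarrow>bool. \<forall>i\<in>D. \<not> y i} else UNIV"
  have eq: "{x. \<forall>n\<in>M. \<forall>i\<in>D. \<not> x n i} = Pi {0..<N} ?B"
    using assms(3) by (auto simp: Pi_def)
  have "measure_pmf.prob (bf_inputs N L K) (Pi {0..<N} ?B)
     = (\<Prod>n\<in>{0..<N}. measure_pmf.prob (bloom_filter L (K n L)) (?B n))"
    unfolding bf_inputs_def by (rule measure_Pi_pmf_Pi) simp
  also have "\<dots> = (\<Prod>n\<in>{0..<N}. if n \<in> M then ((real L - card D) / L) ^ K n L else 1)"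
    by (intro prod.cong refl) (simp add: bloom_empty_prob[OF assms(1,2)])
  also have "\<dots> = (\<Prod>n\<in>{0..<N} \<inter> M. ((real L - card D) / L) ^ K n L)"
    by (simp add: prod.inter_restrict)
  also have "{0..<N} \<inter> M = M" using assms(3) by auto
  finally show ?thesis by (simp add: eq)
qed

lemma bf_perm_pmf:
  assumes L: "L \<ge> 1" and b: "bij \<sigma>" and im: "\<sigma> ` {0..<L} = {0..<L}"
  shows "pmf (bf_inputs N L K) (\<lambda>n. if n \<in> S then x n \<circ> \<sigma> else x n) = pmf (bf_inputs N L K) x"
proof -
  have out: "(\<forall>n. n \<notin> {0..<N} \<longrightarrow> (if n \<in> S then x n \<circ> \<sigma> else x n) = (\<lambda>i. False))
      \<longleftrightarrow> (\<forall>n. n \<notin> {0..<N} \<longrightarrow> x n = (\<lambda>i. False))"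
  proof -
    have "x n \<circ> \<sigma> = (\<lambda>i. False) \<longleftrightarrow> x n = (\<lambda>i. False)" for n
      using b by (metis bij_is_surj comp_apply fun.map_comp o_id surj_iff)
    then show ?thesis by (metis (full_types))
  qed
  show ?thesis
    unfolding bf_inputs_def pmf_Pi[OF finite_atLeastLessThan] out
    by (auto intro!: prod.cong simp: bloom_perm_pmf[OF assms])
qed



lemma exists_perm:
  assumes fin: "finite V" and U: "U \<subseteq> V" and U': "U' \<subseteq> V" and c: "card U = card U'"
  shows "\<exists>\<sigma>::nat\<Rightarrow>nat. bij \<sigma> \<and> (\<forall>i. i \<notin> V \<longrightarrow> \<sigma> i = i) \<and> \<sigma> ` U = U' \<and> \<sigma> ` (V - U) = V - U'"
proof -
  have fU: "finite U" "finite U'" using fin U U' finite_subset by auto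
  obtain g where g: "bij_betw g U U'" using finite_same_card_bij[OF fU c] by blast
  have "card (V - U) = card (V - U')"
    using fin U U' c fU by (simp add: card_Diff_subset)
  then obtain h where h: "bij_betw h (V - U) (V - U')"
    using finite_same_card_bij[of "V - U" "V - U'"] fin by auto
  define \<sigma> where "\<sigma> = (\<lambda>i. if i \<in> U then g i else if i \<in> V then h i else i)"
  have b1: "bij_betw \<sigma> U U'" using g bij_betw_cong[of U \<sigma> g U'] by (simp add: \<sigma>_def)
  have b2: "bij_betw \<sigma> (V - U) (V - U')" using h bij_betw_cong[of "V - U" \<sigma> h "V - U'"] by (simp add: \<sigma>_def)
  have b3: "bij_betw \<sigma> (- V) (- V)"
  proof -
    have "\<And>a. a \<in> - V \<Longrightarrow> \<sigma> a = id a" using U by (auto simp: \<sigma>_def)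
    then show ?thesis using bij_betw_cong[of "- V" \<sigma> id "- V"] by simp
  qed
  have "bij_betw \<sigma> (U \<union> (V - U) \<union> - V) (U' \<union> (V - U') \<union> - V)"
    by (intro bij_betw_combine b1 b2 b3) (use U' in auto)
  moreover have "U \<union> (V - U) \<union> - V = UNIV" "U' \<union> (V - U') \<union> - V = UNIV" using U U' by auto
  ultimately have "bij \<sigma>" by simp
  moreover have "\<forall>i. i \<notin> V \<longrightarrow> \<sigma> i = i" using U by (auto simp: \<sigma>_def)
  ultimately show ?thesis using b1 b2 by (auto simp: bij_betw_def)
qed




lemma bf_perm_map:
  assumes L: "L \<ge> 1" and b: "bij \<sigma>" and im: "\<sigma> ` {0..<L} = {0..<L}"
  shows "map_pmf (\<lambda>x n. if n \<in> S then x n \<circ> \<sigma> else x n) (bf_inputs N L K) = bf_inputs N L K"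
proof (rule pmf_eqI)
  fix y :: "nat \<Rightarrow> nat \<Rightarrow> bool"
  define \<Phi> :: "(nat \<Rightarrow> nat \<Rightarrow> bool) \<Rightarrow> _" where "\<Phi> = (\<lambda>x n. if n \<in> S then x n \<circ> \<sigma> else x n)"
  define \<Psi> :: "(nat \<Rightarrow> nat \<Rightarrow> bool) \<Rightarrow> _" where "\<Psi> = (\<lambda>x n. if n \<in> S then x n \<circ> inv \<sigma> else x n)"
  have si: "\<sigma> (inv \<sigma> j) = j" "inv \<sigma> (\<sigma> j) = j" for j using b by (auto simp: bij_def surj_f_inv_f inv_f_f)
  have PP: "\<Phi> (\<Psi> y) = y" unfolding \<Phi>_def \<Psi>_def by (auto simp: fun_eq_iff si)
  have inj: "inj \<Phi>"
  proof (rule injI)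
    fix x x' assume "\<Phi> x = \<Phi> x'"
    then have "\<Psi> (\<Phi> x) = \<Psi> (\<Phi> x')" by simp
    moreover have "\<Psi> (\<Phi> z) = z" for z unfolding \<Phi>_def \<Psi>_def by (auto simp: fun_eq_iff si)
    ultimately show "x = x'" by simp
  qed
  have "pmf (map_pmf \<Phi> (bf_inputs N L K)) y = pmf (map_pmf \<Phi> (bf_inputs N L K)) (\<Phi> (\<Psi> y))" by (simp add: PP)
  also have "\<dots> = pmf (bf_inputs N L K) (\<Psi> y)" by (rule pmf_map_inj'[OF inj])
  also have "\<dots> = pmf (bf_inputs N L K) (\<Phi> (\<Psi> y))" unfolding \<Phi>_def by (rule bf_perm_pmf[OF assms, symmetric])
  finally have "pmf (map_pmf \<Phi> (bf_inputs N L K)) y = pmf (bf_inputs N L K) y" unfolding PP .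
  then show "pmf (map_pmf (\<lambda>x n. if n \<in> S then x n \<circ> \<sigma> else x n) (bf_inputs N L K)) y = pmf (bf_inputs N L K) y"
    unfolding \<Phi>_def .
qed

lemma key_bound:
  assumes L: "L \<ge> 1" and S: "S \<subseteq> {..<N}" and x0: "x0 \<in> set_pmf (bf_inputs N L K)"
  shows "pmf (map_pmf (\<lambda>w. (or_output N w, restrict w ({..<N} - S))) (bf_inputs N L K)) (or_output N x0, restrict x0 ({..<N} - S))
      * real (card {i\<in>{0..<L}. \<forall>n\<in>{..<N} - S. \<not> x0 n i} choose card {i\<in>{0..<L}. \<forall>n<N. \<not> x0 n i})
      \<le> pmf (map_pmf (\<lambda>w. restrict w ({..<N} - S)) (bf_inputs N L K)) (restrict x0 ({..<N} - S))"
proof -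
  define P where "P = bf_inputs N L K"
  define Sb where "Sb = {..<N} - S"
  define B where "B = or_output N"
  define C where "C = (\<lambda>w::nat\<Rightarrow>nat\<Rightarrow>bool. restrict w Sb)"
  define V0 where "V0 = {i\<in>{0..<L}. \<forall>n\<in>Sb. \<not> x0 n i}"
  define U0 where "U0 = {i\<in>{0..<L}. \<forall>n<N. \<not> x0 n i}"
  define T where "T = (\<lambda>U (i::nat). i < L \<and> i \<notin> U)"
  define Uf where "Uf = {U. U \<subseteq> V0 \<and> card U = card U0}"
  define E where "E = (\<lambda>U. {w. C w = C x0 \<and> B w = T U})"
  have x0P: "x0 \<in> set_pmf P" using x0 by (simp add: P_def)
  have finV0: "finite V0" by (simp add: V0_def)
  have U0V0: "U0 \<subseteq> V0" by (auto simp: U0_def V0_def Sb_def)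
  have V0L: "V0 \<subseteq> {0..<L}" by (auto simp: V0_def)
  have B0: "B x0 = T U0"
  proof
    fix i show "B x0 i = T U0 i"
      using bf_set_out[OF L x0, of i] by (cases "i < L") (auto simp: B_def or_output_def T_def U0_def)
  qed
  have Ceq: "C w = C x0 \<longleftrightarrow> (\<forall>n\<in>Sb. w n = x0 n)" for w
    by (auto simp: C_def fun_eq_iff restrict_def split: if_splits)
  have pBC: "pmf (map_pmf (\<lambda>w. (B w, C w)) P) (B x0, C x0) = measure_pmf.prob P (E U0)"
    by (simp add: pmf_map E_def B0 vimage_def conj_commute)
  have pC: "pmf (map_pmf C P) (C x0) = measure_pmf.prob P {w. C w = C x0}"
    by (simp add: pmf_map vimage_def)
  have eqm: "measure_pmf.prob P (E U) = measure_pmf.prob P (E U0)" if U: "U \<in> Uf" for U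
  proof -
    from U have UV0: "U \<subseteq> V0" and cU: "card U = card U0" by (auto simp: Uf_def)
    obtain \<sigma> where b: "bij \<sigma>" and fix0: "\<forall>i. i \<notin> V0 \<longrightarrow> \<sigma> i = i" and i1: "\<sigma> ` U = U0"
        and i2: "\<sigma> ` (V0 - U) = V0 - U0"
      using exists_perm[OF finV0 UV0 U0V0 cU] by blast
    have imV0: "\<sigma> ` V0 = V0"
    proof -
      have "V0 = U \<union> (V0 - U)" using UV0 by auto
      then have "\<sigma> ` V0 = U0 \<union> (V0 - U0)" by (metis i1 i2 image_Un)
      then show ?thesis using U0V0 by auto
    qed
    have idim: "\<sigma> ` A = A" if "A \<inter> V0 = {}" for A
    proof -
      have "\<sigma> ` A = id ` A" by (rule image_cong) (use that fix0 in auto)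
      then show ?thesis by simp
    qed
    have imL: "\<sigma> ` {0..<L} = {0..<L}"
    proof -
      have "{0..<L} = V0 \<union> ({0..<L} - V0)" using V0L by auto
      then have "\<sigma> ` {0..<L} = \<sigma> ` V0 \<union> \<sigma> ` ({0..<L} - V0)" by (metis image_Un)
      also have "\<dots> = V0 \<union> ({0..<L} - V0)" using imV0 idim[of "{0..<L} - V0"] by auto
      finally show ?thesis using V0L by auto
    qed
    have hT: "T U0 (\<sigma> i) = T U i" for i
    proof (cases "i \<in> V0")
      case False
      then show ?thesis using fix0 UV0 U0V0 by (auto simp: T_def)
    next
      case True
      show ?thesis
      proof (cases "i \<in> U")
        case True
        then have "\<sigma> i \<in> U0" using i1 by auto
        then show ?thesis using True by (simp add: T_def)
      next
        case False
        then have "\<sigma> i \<in> V0 - U0" using i2 \<open>i \<in> V0\<close> by auto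
        then show ?thesis using False \<open>i \<in> V0\<close> V0L by (auto simp: T_def)
      qed
    qed
    have surjs: "surj \<sigma>" using b by (simp add: bij_is_surj)
    define \<Phi> :: "(nat \<Rightarrow> nat \<Rightarrow> bool) \<Rightarrow> _" where "\<Phi> = (\<lambda>x n. if n \<in> S then x n \<circ> \<sigma> else x n)"
    have CPhi: "C (\<Phi> x) = C x" for x by (auto simp: C_def \<Phi>_def Sb_def fun_eq_iff restrict_def)
    have BPhi: "B (\<Phi> x) = B x \<circ> \<sigma>" if "C x = C x0" for x
    proof
      fix i
      have xx: "\<forall>n\<in>Sb. x n = x0 n" using that Ceq by blast
      have inv0: "x0 n i = x0 n (\<sigma> i)" if "n \<in> Sb" for n
      proof (cases "i \<in> V0")
        case True
        then have "\<sigma> i \<in> V0" using imV0 by auto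
        then show ?thesis using True that by (auto simp: V0_def)
      qed (use fix0 in auto)
      have "x n i = x n (\<sigma> i)" if "n < N" "n \<notin> S" for n
        using xx inv0 that by (auto simp: Sb_def)
      then show "B (\<Phi> x) i = (B x \<circ> \<sigma>) i"
        by (auto simp: B_def or_output_def \<Phi>_def)
    qed
    have "\<Phi> -` E U = E U0"
    proof (intro set_eqI iffI)
      fix x assume "x \<in> \<Phi> -` E U"
      then have c: "C x = C x0" and bx: "B x \<circ> \<sigma> = T U" using CPhi BPhi by (auto simp: E_def)
      have "B x \<circ> \<sigma> = T U0 \<circ> \<sigma>" using bx hT by (auto simp: fun_eq_iff)
      then have "B x = T U0"
        by (metis (no_types, lifting) comp_apply ext surjs surj_f_inv_f)
      then show "x \<in> E U0" using c by (simp add: E_def)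
    next
      fix x assume "x \<in> E U0"
      then have c: "C x = C x0" and bx: "B x = T U0" by (auto simp: E_def)
      have "B (\<Phi> x) = T U" using BPhi[OF c] bx hT by (auto simp: fun_eq_iff)
      then show "x \<in> \<Phi> -` E U" using c CPhi by (simp add: E_def)
    qed
    moreover have "map_pmf \<Phi> P = P" unfolding \<Phi>_def P_def by (rule bf_perm_map[OF L b imL])
    ultimately show ?thesis by (metis measure_map_pmf)
  qed
  have disj: "disjoint_family_on E Uf"
    unfolding disjoint_family_on_def
  proof (intro ballI impI)
    fix U U' assume "U \<in> Uf" "U' \<in> Uf" "U \<noteq> U'"
    then have "U \<subseteq> {0..<L}" "U' \<subseteq> {0..<L}" using V0L by (auto simp: Uf_def)
    then have "T U \<noteq> T U'" using \<open>U \<noteq> U'\<close> unfolding T_def by (metis (mono_tags, lifting) atLeastLessThan_iff subsetD subset_antisym subsetI)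
    then show "E U \<inter> E U' = {}" by (auto simp: E_def)
  qed
  have finUf: "finite Uf" using finV0 by (simp add: Uf_def)
  have cardUf: "card Uf = card V0 choose card U0" unfolding Uf_def by (rule n_subsets[OF finV0])
  have "real (card Uf) * measure_pmf.prob P (E U0) = (\<Sum>U\<in>Uf. measure_pmf.prob P (E U))"
    using eqm by simp
  also have "\<dots> = measure_pmf.prob P (\<Union>U\<in>Uf. E U)"
    by (rule measure_pmf.finite_measure_finite_Union[symmetric]) (use finUf disj in auto)
  also have "\<dots> \<le> measure_pmf.prob P {w. C w = C x0}"
    by (rule measure_pmf.finite_measure_mono) (auto simp: E_def)
  finally show ?thesis
    using pBC pC cardUf by (simp add: P_def B_def C_def Sb_def V0_def U0_def mult.commute)
qed




lemma sum_pmf_indicator: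
  assumes fin: "finite (set_pmf P)"
  shows "(\<Sum>x\<in>set_pmf P. pmf P x * (if x \<in> E then 1 else 0)) = measure_pmf.prob P E"
proof -
  have "(\<Sum>x\<in>set_pmf P. pmf P x * (if x \<in> E then 1 else 0)) = (\<Sum>x\<in>set_pmf P \<inter> E. pmf P x)"
    using fin by (simp add: sum.inter_restrict[symmetric] if_distrib cong: if_cong)
  also have "\<dots> = measure_pmf.prob P (E \<inter> set_pmf P)"
    using fin by (simp add: measure_measure_pmf_finite Int_commute)
  also have "\<dots> = measure_pmf.prob P E" by (simp add: measure_Int_set_pmf)
  finally show ?thesis .
qed

lemma cheb_finite:
  assumes fin: "finite (set_pmf P)" and a: "a > 0"
  shows "measure_pmf.prob P {x. a \<le> \<bar>f x - m\<bar>} \<le> (\<Sum>x\<in>set_pmf P. pmf P x * (f x - m)\<^sup>2) / a\<^sup>2"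
proof -
  have "measure_pmf.prob P {x. a \<le> \<bar>f x - m\<bar>} = (\<Sum>x\<in>set_pmf P. pmf P x * (if x \<in> {x. a \<le> \<bar>f x - m\<bar>} then 1 else 0))"
    by (rule sum_pmf_indicator[OF fin, symmetric])
  also have "\<dots> \<le> (\<Sum>x\<in>set_pmf P. pmf P x * ((f x - m)\<^sup>2 / a\<^sup>2))"
  proof (intro sum_mono mult_left_mono)
    fix x
    show "(if x \<in> {x. a \<le> \<bar>f x - m\<bar>} then 1 else 0) \<le> (f x - m)\<^sup>2 / a\<^sup>2"
    proof (cases "a \<le> \<bar>f x - m\<bar>")
      case True
      then have "a\<^sup>2 \<le> (f x - m)\<^sup>2" using a by (metis abs_ge_self abs_le_square_iff abs_of_pos order.trans power2_abs)
      then show ?thesis using True a by simp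
    qed simp
  qed simp
  also have "\<dots> = (\<Sum>x\<in>set_pmf P. pmf P x * (f x - m)\<^sup>2) / a\<^sup>2"
    by (simp add: sum_divide_distrib)
  finally show ?thesis .
qed

definition cnt :: "nat \<Rightarrow> nat set \<Rightarrow> (nat \<Rightarrow> nat \<Rightarrow> bool) \<Rightarrow> nat" where
  "cnt L M x = card {i\<in>{0..<L}. \<forall>n\<in>M. \<not> x n i}"

definition qq :: "nat \<Rightarrow> (nat \<Rightarrow> nat \<Rightarrow> nat) \<Rightarrow> nat set \<Rightarrow> real" where
  "qq L K M = (\<Prod>n\<in>M. ((real L - 1) / L) ^ K n L)"

lemma qq_bounds: "L \<ge> 1 \<Longrightarrow> 0 \<le> qq L K M \<and> qq L K M \<le> 1"
  unfolding qq_def by (auto intro!: prod_nonneg prod_le_1 power_le_one)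

lemma conc:
  assumes L: "L \<ge> 1" and M: "M \<subseteq> {..<N}" and e: "\<epsilon> > 0"
  shows "measure_pmf.prob (bf_inputs N L K) {x. \<epsilon> * L \<le> \<bar>real (cnt L M x) - L * qq L K M\<bar>} \<le> 1 / (\<epsilon>\<^sup>2 * L)"
proof -
  define P where "P = bf_inputs N L K"
  define q where "q = qq L K M"
  have fin: "finite (set_pmf P)" unfolding P_def by (rule bf_finite[OF L])
  have M': "M \<subseteq> {0..<N}" using M by auto
  define ind where "ind = (\<lambda>D x. if x \<in> {x::nat\<Rightarrow>nat\<Rightarrow>bool. \<forall>n\<in>M. \<forall>i\<in>D. \<not> x n i} then 1 else (0::real))"
  have cnt_sum: "real (cnt L M x) = (\<Sum>i\<in>{0..<L}. ind {i} x)" for x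
    unfolding cnt_def ind_def by (simp add: sum.inter_filter[symmetric])
  have cnt_sq: "(real (cnt L M x))\<^sup>2 = (\<Sum>i\<in>{0..<L}. \<Sum>j\<in>{0..<L}. ind {i, j} x)" for x
    unfolding cnt_sum power2_eq_square sum_product by (intro sum.cong refl) (auto simp: ind_def)
  have Eind: "(\<Sum>x\<in>set_pmf P. pmf P x * ind D x) = (\<Prod>n\<in>M. ((real L - card D) / L) ^ K n L)"
    if "D \<subseteq> {0..<L}" for D
  proof -
    have "(\<Sum>x\<in>set_pmf P. pmf P x * ind D x) = measure_pmf.prob P {x. \<forall>n\<in>M. \<forall>i\<in>D. \<not> x n i}"
      unfolding ind_def by (rule sum_pmf_indicator[OF fin])
    also have "\<dots> = (\<Prod>n\<in>M. ((real L - card D) / L) ^ K n L)"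
      unfolding P_def by (rule bf_empty_prob[OF L that M'])
    finally show ?thesis .
  qed
  have E1: "(\<Sum>x\<in>set_pmf P. pmf P x * real (cnt L M x)) = L * q"
  proof -
    have "(\<Sum>x\<in>set_pmf P. pmf P x * real (cnt L M x)) = (\<Sum>i\<in>{0..<L}. \<Sum>x\<in>set_pmf P. pmf P x * ind {i} x)"
      unfolding cnt_sum by (simp add: sum_distrib_left sum.swap[of _ "set_pmf P"])
    also have "\<dots> = (\<Sum>i\<in>{0..<L}. q)"
      by (intro sum.cong refl) (simp add: Eind q_def qq_def)
    finally show ?thesis by simp
  qed
  have q2: "(\<Prod>n\<in>M. ((real L - card {i, j}) / L) ^ K n L) \<le> (if i = j then q else q\<^sup>2)"
    if ij: "i < L" "j < L" for i j
  proof (cases "i = j")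
    case True then show ?thesis by (simp add: q_def qq_def)
  next
    case False
    then have L2: "L \<ge> 2" using ij by linarith
    have "(\<Prod>n\<in>M. ((real L - card {i, j}) / L) ^ K n L) = (\<Prod>n\<in>M. ((real L - 2) / L) ^ K n L)"
      using False by simp
    also have "\<dots> \<le> (\<Prod>n\<in>M. (((real L - 1) / L)\<^sup>2) ^ K n L)"
    proof (intro prod_mono conjI power_mono)
      have Lr: "real L \<ge> 2" using L2 by simp
      show "(real L - 2) / real L \<le> ((real L - 1) / real L)\<^sup>2"
        using Lr by (simp add: field_simps power2_eq_square)
      show "0 \<le> (real L - 2) / real L" using Lr by simp
      then show "0 \<le> ((real L - 2) / real L) ^ K n L" for n by simp
    qed
    also have "\<dots> = q\<^sup>2"
      by (simp add: q_def qq_def prod_power_distrib power_mult[symmetric] mult.commute)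
    finally show ?thesis using False by simp
  qed
  have E2: "(\<Sum>x\<in>set_pmf P. pmf P x * (real (cnt L M x))\<^sup>2) \<le> L * q + (L * q)\<^sup>2"
  proof -
    have "(\<Sum>x\<in>set_pmf P. pmf P x * (real (cnt L M x))\<^sup>2) = (\<Sum>i\<in>{0..<L}. \<Sum>j\<in>{0..<L}. \<Sum>x\<in>set_pmf P. pmf P x * ind {i, j} x)"
      unfolding cnt_sq by (simp add: sum_distrib_left sum.swap[of _ "set_pmf P"])
    also have "\<dots> \<le> (\<Sum>i\<in>{0..<L}. \<Sum>j\<in>{0..<L}. (if i = j then q else q\<^sup>2))"
      by (intro sum_mono) (simp add: Eind q2)
    also have "\<dots> \<le> (\<Sum>i\<in>{0..<L}. q + L * q\<^sup>2)"
    proof (intro sum_mono)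
      fix i assume i: "i \<in> {0..<L}"
      have "(\<Sum>j\<in>{0..<L}. (if i = j then q else q\<^sup>2)) \<le> (\<Sum>j\<in>{0..<L}. ((if i = j then q else 0) + q\<^sup>2))"
        by (intro sum_mono) auto
      also have "\<dots> = q + L * q\<^sup>2" using i by (simp add: sum.distrib)
      finally show "(\<Sum>j\<in>{0..<L}. (if i = j then q else q\<^sup>2)) \<le> q + L * q\<^sup>2" .
    qed
    also have "\<dots> = L * q + (L * q)\<^sup>2" by (simp add: algebra_simps power2_eq_square)
    finally show ?thesis .
  qed
  have sum1: "(\<Sum>x\<in>set_pmf P. pmf P x) = 1" using fin by (simp add: sum_pmf_eq_1)
  have var: "(\<Sum>x\<in>set_pmf P. pmf P x * (real (cnt L M x) - L * q)\<^sup>2) \<le> L"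
  proof -
    have "(\<Sum>x\<in>set_pmf P. pmf P x * (real (cnt L M x) - L * q)\<^sup>2)
       = (\<Sum>x\<in>set_pmf P. pmf P x * (real (cnt L M x))\<^sup>2) - 2 * (L * q) * (\<Sum>x\<in>set_pmf P. pmf P x * real (cnt L M x))
         + (L * q)\<^sup>2 * (\<Sum>x\<in>set_pmf P. pmf P x)"
      by (simp add: power2_diff algebra_simps sum.distrib sum_subtractf sum_distrib_left sum_distrib_right[symmetric])
    also have "\<dots> \<le> L * q"
    proof -
      have h1: "2 * (L * q) * (\<Sum>x\<in>set_pmf P. pmf P x * real (cnt L M x)) = 2 * (L * q)\<^sup>2"
        using E1 by (simp add: power2_eq_square)
      have h2: "(L * q)\<^sup>2 * (\<Sum>x\<in>set_pmf P. pmf P x) = (L * q)\<^sup>2" using sum1 by simp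
      show ?thesis using E2 h1 h2 by linarith
    qed
    also have "\<dots> \<le> L" using qq_bounds[OF L, of K M] by (simp add: q_def mult_left_le)
    finally show ?thesis .
  qed
  have "measure_pmf.prob P {x. \<epsilon> * L \<le> \<bar>real (cnt L M x) - L * q\<bar>}
      \<le> (\<Sum>x\<in>set_pmf P. pmf P x * (real (cnt L M x) - L * q)\<^sup>2) / (\<epsilon> * L)\<^sup>2"
    by (rule cheb_finite[OF fin]) (use e L in simp)
  also have "\<dots> \<le> L / (\<epsilon> * L)\<^sup>2"
    by (intro divide_right_mono var) simp
  also have "\<dots> = 1 / (\<epsilon>\<^sup>2 * L)" using L by (simp add: power2_eq_square field_simps)
  finally show ?thesis by (simp add: P_def q_def)
qed




lemma binom_step:
  fixes p q :: real
  assumes "k < v"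
  shows "real (v choose Suc k) * p ^ Suc k * q ^ (v - Suc k) * (real (Suc k) * q)
       = real (v choose k) * p ^ k * q ^ (v - k) * (real (v - k) * p)"
proof -
  have c: "Suc k * (v choose Suc k) = (v - k) * (v choose k)"
    using binomial_absorption[of k v] binomial_absorb_comp[of v k] by simp
  have c': "real (Suc k) * real (v choose Suc k) = real (v - k) * real (v choose k)"
    using c by (metis of_nat_mult)
  have e: "q ^ (v - k) = q * q ^ (v - Suc k)" using assms
    by (metis Suc_diff_Suc power_Suc)
  have "real (v choose Suc k) * p ^ Suc k * q ^ (v - Suc k) * (real (Suc k) * q)
      = (real (Suc k) * real (v choose Suc k)) * p ^ Suc k * (q * q ^ (v - Suc k))"
    by (simp add: algebra_simps)
  also have "\<dots> = (real (v - k) * real (v choose k)) * p ^ Suc k * q ^ (v - k)"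
    by (simp only: c' e)
  also have "\<dots> = real (v choose k) * p ^ k * q ^ (v - k) * (real (v - k) * p)"
    by (simp add: algebra_simps)
  finally show ?thesis .
qed

lemma binom_lower:
  fixes u v :: nat
  assumes u: "0 < u" and uv: "u < v"
  shows "log 2 (real (v choose u)) \<ge> u * log 2 (v / u) + (v - u) * log 2 (v / (v - u)) - log 2 (v + 1)"
proof -
  define p where "p = real u / v"
  define q where "q = real (v - u) / v"
  have v0: "real v > 0" using uv by simp
  have p0: "p > 0" and q0: "q > 0" using u uv v0 by (auto simp: p_def q_def)
  have pq: "p + q = 1" using uv v0 by (simp add: p_def q_def of_nat_diff field_simps)
  define t where "t = (\<lambda>k. real (v choose k) * p ^ k * q ^ (v - k))"
  have t0: "t k \<ge> 0" for k using p0 q0 by (simp add: t_def)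
  have up: "t (Suc k) \<le> t k" if "u \<le> k" "k < v" for k
  proof -
    have key: "t (Suc k) * (real (Suc k) * q) = t k * (real (v - k) * p)"
      unfolding t_def by (rule binom_step[OF that(2)])
    have "real (v - k) * p \<le> real (Suc k) * q"
    proof -
      have "real (v - k) * real u \<le> real (Suc k) * real (v - u)"
      proof -
        have "(v - k) * u \<le> (v - u) * u" using that by (intro mult_right_mono) auto
        also have "\<dots> \<le> (v - u) * Suc k" using that by (intro mult_left_mono) auto
        finally show ?thesis by (metis mult.commute of_nat_le_iff of_nat_mult)
      qed
      then show ?thesis using v0 by (simp add: p_def q_def divide_right_mono mult.assoc[symmetric] times_divide_eq_right)
    qed
    then have "t (Suc k) * (real (Suc k) * q) \<le> t k * (real (Suc k) * q)"
      using key t0 by (metis mult_left_mono)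
    moreover have "real (Suc k) * q > 0" using q0 by simp
    ultimately show ?thesis by (rule mult_right_le_imp_le)
  qed
  have down: "t k \<le> t (Suc k)" if "k < u" for k
  proof -
    have kv: "k < v" using that uv by simp
    have key: "t (Suc k) * (real (Suc k) * q) = t k * (real (v - k) * p)"
      unfolding t_def by (rule binom_step[OF kv])
    have "real (Suc k) * q \<le> real (v - k) * p"
    proof -
      have "real (Suc k) * real (v - u) \<le> real (v - k) * real u"
      proof -
        have "Suc k * (v - u) \<le> u * (v - u)" using that by (intro mult_right_mono) auto
        also have "\<dots> \<le> u * (v - k)" using that by (intro mult_left_mono) auto
        finally show ?thesis by (metis mult.commute of_nat_le_iff of_nat_mult)
      qed
      then show ?thesis using v0 by (simp add: p_def q_def divide_right_mono mult.assoc[symmetric] times_divide_eq_right)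
    qed
    then have "t k * (real (Suc k) * q) \<le> t k * (real (v - k) * p)" using t0 by (metis mult_left_mono)
    then have "t k * (real (Suc k) * q) \<le> t (Suc k) * (real (Suc k) * q)" using key by simp
    moreover have "real (Suc k) * q > 0" using q0 by simp
    ultimately show ?thesis by (rule mult_right_le_imp_le)
  qed
  have tmax: "t k \<le> t u" if "k \<le> v" for k
  proof (cases "k \<le> u")
    case True
    show ?thesis using True
    proof (induction k rule: inc_induct)
      case (step n) then show ?case using down[of n] by linarith
    qed simp
  next
    case False
    then have uk: "u \<le> k" by simp
    show ?thesis using uk that
    proof (induction k rule: dec_induct)
      case (step n) then show ?case using up[of n] by linarith
    qed simp
  qed
  have "1 = (p + q) ^ v" using pq by simp
  also have "\<dots> = (\<Sum>k\<le>v. t k)" unfolding binomial_ring t_def by simp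
  also have "\<dots> \<le> (\<Sum>k\<le>v. t u)" by (intro sum_mono tmax) simp
  also have "\<dots> = (v + 1) * t u" by simp
  finally have tu: "1 / (v + 1) \<le> t u" by (simp add: field_simps)
  have cpos: "real (v choose u) > 0" using uv by simp
  have tpos: "t u > 0" using p0 q0 cpos by (simp add: t_def)
  have "log 2 (1 / (v + 1)) \<le> log 2 (t u)" using tu tpos by (intro log_le_cancel_iff[THEN iffD2]) auto
  also have "log 2 (t u) = log 2 (real (v choose u)) + u * log 2 p + (v - u) * log 2 q"
    using cpos p0 q0 by (simp add: t_def log_mult log_nat_power)
  finally have "- log 2 (v + 1) \<le> log 2 (real (v choose u)) + u * log 2 p + (v - u) * log 2 q"
    by (simp add: log_divide)
  moreover have "log 2 p = - log 2 (v / u)" using u v0 by (simp add: p_def log_divide)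
  moreover have "log 2 q = - log 2 (v / (v - u))" using uv v0 by (simp add: q_def log_divide)
  ultimately show ?thesis by (simp add: algebra_simps)
qed




lemma pow_lim:
  assumes "((\<lambda>L. real (k L) / real L) \<longlongrightarrow> c) sequentially"
  shows "((\<lambda>L. ((real L - 1) / L) ^ k L) \<longlongrightarrow> exp (- c)) sequentially"
proof -
  have l1: "((\<lambda>L::nat. real L * ln ((real L - 1) / L)) \<longlongrightarrow> -1) sequentially"
    by real_asymp
  have "((\<lambda>L. exp ((real (k L) / real L) * (real L * ln ((real L - 1) / L)))) \<longlongrightarrow> exp (c * -1)) sequentially"
    by (intro tendsto_intros assms l1)
  moreover have "eventually (\<lambda>L. exp ((real (k L) / real L) * (real L * ln ((real L - 1) / L))) = ((real L - 1) / L) ^ k L) sequentially"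
    using eventually_ge_at_top[of "2::nat"]
  proof eventually_elim
    case (elim L)
    then have pos: "(real L - 1) / L > 0" by simp
    have "exp ((real (k L) / real L) * (real L * ln ((real L - 1) / L))) = exp (real (k L) * ln ((real L - 1) / L))"
      using elim by simp
    also have "\<dots> = ((real L - 1) / L) ^ k L"
      using pos by (simp add: exp_of_nat_mult)
    finally show ?case .
  qed
  ultimately show ?thesis by (simp add: tendsto_cong)
qed

definition phi :: "real \<Rightarrow> real \<Rightarrow> real" where
  "phi a b = b * log 2 (a / b) + (a - b) * log 2 (a / (a - b))"

lemma phi_cont:
  assumes b0: "0 < b0" and ab: "b0 < a0" and e: "e > 0"
  shows "\<exists>d>0. \<forall>a b. \<bar>a - a0\<bar> < d \<longrightarrow> \<bar>b - b0\<bar> < d \<longrightarrow> phi a b > phi a0 b0 - e"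
proof -
  have "continuous (at (a0, b0)) (\<lambda>z. snd z * log 2 (fst z / snd z) + (fst z - snd z) * log 2 (fst z / (fst z - snd z)))"
    using b0 ab by (intro continuous_intros) auto
  then obtain d where d: "d > 0" and hd: "\<And>z. dist z (a0, b0) < d \<Longrightarrow>
      dist (snd z * log 2 (fst z / snd z) + (fst z - snd z) * log 2 (fst z / (fst z - snd z))) (phi a0 b0) < e"
    unfolding continuous_at_eps_delta phi_def using e by fastforce
  show ?thesis
  proof (intro exI[of _ "d / 2"] conjI allI impI)
    show "d / 2 > 0" using d by simp
    fix a b assume a: "\<bar>a - a0\<bar> < d / 2" and b: "\<bar>b - b0\<bar> < d / 2"
    have "dist (a, b) (a0, b0) \<le> \<bar>a - a0\<bar> + \<bar>b - b0\<bar>"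
      unfolding dist_Pair_Pair dist_real_def using sqrt_sum_squares_le_sum_abs[of "a - a0" "b - b0"] by simp
    also have "\<dots> < d" using a b by simp
    finally have "dist (phi a b) (phi a0 b0) < e" using hd[of "(a, b)"] by (simp add: phi_def)
    then show "phi a b > phi a0 b0 - e" by (simp add: dist_real_def abs_less_iff)
  qed
qed

lemma phi_ineq:
  assumes "0 < \<beta>" "\<beta> \<le> 1"
  shows "phi (2 powr (\<beta> - 1)) (1/2) \<ge> \<beta>"
proof -
  define s where "s = 2 powr \<beta>"
  define t where "t = s - 1"
  have s1: "s > 1" unfolding s_def using assms by simp
  have s2: "s \<le> 2" unfolding s_def using assms powr_mono[of \<beta> 1 2] by simp
  have t0: "t > 0" "t \<le> 1" using s1 s2 by (auto simp: t_def)
  have a: "2 powr (\<beta> - 1) = s / 2" unfolding s_def by (simp add: powr_diff)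
  have ls: "log 2 s = \<beta>" unfolding s_def by simp
  have "phi (2 powr (\<beta> - 1)) (1/2) = (1/2) * log 2 s + (t / 2) * log 2 (s / t)"
    unfolding phi_def a t_def by (simp add: field_simps)
  also have "log 2 (s / t) = log 2 s - log 2 t" using s1 t0 by (simp add: log_divide)
  finally have eq: "phi (2 powr (\<beta> - 1)) (1/2) = (1/2) * log 2 s + (t / 2) * (log 2 s - log 2 t)" .
  have "(1 - t) * ln (1 + t) \<le> (1 - t) * t"
    using t0 ln_add_one_self_le_self[of t] by (intro mult_left_mono) auto
  also have "\<dots> \<le> t * (- ln t)"
  proof -
    have "1 - t \<le> - ln t" using t0 ln_le_minus_one[of t] by simp
    then have "t * (1 - t) \<le> t * (- ln t)" using t0 by (intro mult_left_mono) auto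
    then show ?thesis by (simp add: mult.commute)
  qed
  finally have key: "(1 - t) * ln s \<le> t * (- ln t)" by (simp add: t_def)
  have "t * (log 2 s - log 2 t) \<ge> log 2 s"
  proof -
    have "log 2 s \<le> t * (log 2 s - log 2 t) \<longleftrightarrow> ln s / ln 2 \<le> t * (ln s / ln 2 - ln t / ln 2)"
      by (simp add: log_def)
    also have "\<dots> \<longleftrightarrow> ln s \<le> t * (ln s - ln t)" by (simp add: field_simps)
    finally show ?thesis using key by (simp add: algebra_simps)
  qed
  then show ?thesis unfolding eq ls by simp
qed




lemma info_lower:
  assumes L: "L \<ge> 1" and S: "S \<subseteq> {..<N}"
  shows "cond_mutual_info (bf_inputs N L K) (\<lambda>x. restrict x S) (\<lambda>x. or_output N x) (\<lambda>x. restrict x ({..<N} - S))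
     \<ge> (\<Sum>x\<in>set_pmf (bf_inputs N L K). pmf (bf_inputs N L K) x * log 2 (real (cnt L ({..<N} - S) x choose cnt L {..<N} x)))"
proof (rule cmi_lower[OF bf_finite[OF L]])
  fix x x' :: "nat \<Rightarrow> nat \<Rightarrow> bool" assume "restrict x S = restrict x' S" "restrict x ({..<N} - S) = restrict x' ({..<N} - S)"
  then have "x n = x' n" if "n < N" for n
    using that by (metis Diff_iff lessThan_iff restrict_apply')
  then show "or_output N x = or_output N x'" by (auto simp: or_output_def fun_eq_iff)
next
  fix x assume x: "x \<in> set_pmf (bf_inputs N L K)"
  show "pmf (map_pmf (\<lambda>w. (or_output N w, restrict w ({..<N} - S))) (bf_inputs N L K)) (or_output N x, restrict x ({..<N} - S)) *
        real (cnt L ({..<N} - S) x choose cnt L {..<N} x)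
       \<le> pmf (map_pmf (\<lambda>x. restrict x ({..<N} - S)) (bf_inputs N L K)) (restrict x ({..<N} - S))"
  proof -
    have c1: "cnt L {..<N} x = card {i\<in>{0..<L}. \<forall>n<N. \<not> x n i}"
      unfolding cnt_def by (rule arg_cong[where f=card]) auto
    have c2: "cnt L ({..<N} - S) x = card {i\<in>{0..<L}. \<forall>n\<in>{..<N} - S. \<not> x n i}"
      unfolding cnt_def by (rule refl)
    show ?thesis unfolding c1 c2 by (rule key_bound[OF L S x])
  qed
next
  fix x
  have "cnt L {..<N} x \<le> cnt L ({..<N} - S) x" unfolding cnt_def
    by (intro card_mono) auto
  then show "real (cnt L ({..<N} - S) x choose cnt L {..<N} x) \<ge> 1"
    by (simp add: Suc_leI)
qed

lemma cnt_le: "cnt L M x \<le> L"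
proof -
  have "cnt L M x \<le> card {0..<L}" unfolding cnt_def by (intro card_mono) auto
  then show ?thesis by simp
qed

lemma qq_lim:
  assumes "finite M" and "\<And>n. n \<in> M \<Longrightarrow> ((\<lambda>L. real (K n L) / real L) \<longlongrightarrow> \<kappa> n) sequentially"
  shows "((\<lambda>L. qq L K M) \<longlongrightarrow> exp (- (\<Sum>n\<in>M. \<kappa> n))) sequentially"
proof -
  have "exp (- (\<Sum>n\<in>M. \<kappa> n)) = (\<Prod>n\<in>M. exp (- \<kappa> n))"
    using assms(1) by (simp add: exp_sum[symmetric] sum_negf)
  moreover have "((\<lambda>L. \<Prod>n\<in>M. ((real L - 1) / L) ^ K n L) \<longlongrightarrow> (\<Prod>n\<in>M. exp (- \<kappa> n))) sequentially"
    by (intro tendsto_prod pow_lim assms(2))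
  ultimately show ?thesis unfolding qq_def by simp
qed




lemma main_S:
  fixes N :: nat and R w :: "nat \<Rightarrow> real" and K :: "nat \<Rightarrow> nat \<Rightarrow> nat" and S :: "nat set"
  assumes S: "S \<subseteq> {..<N}"
    and Klim: "\<forall>n<N. ((\<lambda>L. real (K n L) / real L) \<longlongrightarrow> ln 2 * w n) sequentially"
    and w0: "\<forall>n<N. w n \<ge> 0" and w1: "(\<Sum>n<N. w n) = 1"
    and bpos: "0 < (\<Sum>n\<in>S. w n)"
    and RS0: "0 \<le> (\<Sum>n\<in>S. R n)"
    and RS: "(\<Sum>n\<in>S. R n) < (\<Sum>n\<in>S. w n)"
  shows "ereal (\<Sum>n\<in>S. R n) < liminf (\<lambda>L. ereal (cond_mutual_info (bf_inputs N L K) (\<lambda>x. restrict x S)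
            (\<lambda>x. or_output N x) (\<lambda>x. restrict x ({..<N} - S)) / real L))"
proof -
  define Sb where "Sb = {..<N} - S"
  define \<beta> where "\<beta> = (\<Sum>n\<in>S. w n)"
  define RSv where "RSv = (\<Sum>n\<in>S. R n)"
  define \<gamma> where "\<gamma> = \<beta> - RSv"
  have \<gamma>0: "\<gamma> > 0" using RS by (simp add: \<gamma>_def \<beta>_def RSv_def)
  have \<beta>0: "\<beta> > 0" using bpos by (simp add: \<beta>_def)
  have \<beta>1: "\<beta> \<le> 1"
  proof -
    have "\<beta> \<le> (\<Sum>n<N. w n)" unfolding \<beta>_def using S w0 by (intro sum_mono2) auto
    then show ?thesis using w1 by simp
  qed
  have sumSb: "(\<Sum>n\<in>Sb. w n) = 1 - \<beta>" using S w1 by (simp add: Sb_def \<beta>_def sum_diff)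
  define \<alpha>0 where "\<alpha>0 = 2 powr (\<beta> - 1)"
  have \<alpha>0gt: "\<alpha>0 > 1/2"
  proof -
    have "(2::real) powr (-1) < 2 powr (\<beta> - 1)" using \<beta>0 by (intro powr_less_mono) auto
    then show ?thesis by (simp add: \<alpha>0_def powr_minus)
  qed
  define \<phi>0 where "\<phi>0 = phi \<alpha>0 (1/2)"
  have \<phi>0: "\<phi>0 \<ge> \<beta>" unfolding \<phi>0_def \<alpha>0_def using phi_ineq \<beta>0 \<beta>1 by simp
  obtain d where d: "d > 0" and hd: "\<And>a b. \<bar>a - \<alpha>0\<bar> < d \<Longrightarrow> \<bar>b - 1/2\<bar> < d \<Longrightarrow> phi a b > \<phi>0 - \<gamma>/4"
    using phi_cont[of "1/2" \<alpha>0 "\<gamma>/4"] \<alpha>0gt \<gamma>0 unfolding \<phi>0_def by auto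
  define \<epsilon> where "\<epsilon> = min (d/2) (min (1/8) ((\<alpha>0 - 1/2)/4))"
  have \<epsilon>0: "\<epsilon> > 0" and \<epsilon>d: "2 * \<epsilon> \<le> d" and \<epsilon>8: "\<epsilon> \<le> 1/8"
    using d \<alpha>0gt by (auto simp: \<epsilon>_def)
  have "\<epsilon> \<le> (\<alpha>0 - 1/2)/4" unfolding \<epsilon>_def by (auto simp: min_def)
  then have \<epsilon>\<alpha>: "4 * \<epsilon> \<le> \<alpha>0 - 1/2" by (simp add: field_simps)
  have limSb: "((\<lambda>L. qq L K Sb) \<longlongrightarrow> \<alpha>0) sequentially"
  proof -
    have "((\<lambda>L. qq L K Sb) \<longlongrightarrow> exp (- (\<Sum>n\<in>Sb. ln 2 * w n))) sequentially"
      by (rule qq_lim) (use Klim in \<open>auto simp: Sb_def\<close>)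
    moreover have "exp (- (\<Sum>n\<in>Sb. ln 2 * w n)) = \<alpha>0"
    proof -
      have "(\<Sum>n\<in>Sb. ln 2 * w n) = ln 2 * (1 - \<beta>)"
        by (subst sum_distrib_left[symmetric]) (simp add: sumSb)
      moreover have "exp (- (ln 2 * (1 - \<beta>))) = \<alpha>0" by (simp add: \<alpha>0_def powr_def algebra_simps)
      ultimately show ?thesis by simp
    qed
    ultimately show ?thesis by simp
  qed
  have limN: "((\<lambda>L. qq L K {..<N}) \<longlongrightarrow> 1/2) sequentially"
  proof -
    have "((\<lambda>L. qq L K {..<N}) \<longlongrightarrow> exp (- (\<Sum>n<N. ln 2 * w n))) sequentially"
      by (rule qq_lim) (use Klim in auto)
    moreover have "exp (- (\<Sum>n<N. ln 2 * w n)) = 1/2"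
    proof -
      have "(\<Sum>n<N. ln 2 * w n) = ln 2"
        by (subst sum_distrib_left[symmetric]) (simp add: w1)
      then show ?thesis by (simp add: exp_minus)
    qed
    ultimately show ?thesis by simp
  qed
  have llog: "((\<lambda>L::nat. log 2 (real L + 1) / real L) \<longlongrightarrow> 0) sequentially"
    by real_asymp
  have l2: "((\<lambda>L::nat. 2 / (\<epsilon>\<^sup>2 * real L)) \<longlongrightarrow> 0) sequentially"
  proof -
    have "((\<lambda>L::nat. (2 / \<epsilon>\<^sup>2) / real L) \<longlongrightarrow> 0) sequentially" by (rule lim_const_over_n)
    then show ?thesis by simp
  qed
  have limg: "((\<lambda>L. (\<phi>0 - \<gamma>/4 - log 2 (real L + 1) / real L) * (1 - 2 / (\<epsilon>\<^sup>2 * real L))) \<longlongrightarrow> (\<phi>0 - \<gamma>/4 - 0) * (1 - 0)) sequentially"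
    by (intro tendsto_intros llog l2)
  have limc: "((\<lambda>L. \<phi>0 - \<gamma>/4 - log 2 (real L + 1) / real L) \<longlongrightarrow> \<phi>0 - \<gamma>/4 - 0) sequentially"
    by (intro tendsto_intros llog)
  have ev: "eventually (\<lambda>L. L \<ge> 1 \<and> \<bar>qq L K Sb - \<alpha>0\<bar> < \<epsilon> \<and> \<bar>qq L K {..<N} - 1/2\<bar> < \<epsilon>
      \<and> \<phi>0 - \<gamma>/4 - log 2 (real L + 1) / real L > 0
      \<and> (\<phi>0 - \<gamma>/4 - log 2 (real L + 1) / real L) * (1 - 2 / (\<epsilon>\<^sup>2 * real L)) > RSv + \<gamma>/2) sequentially"
  proof (intro eventually_conj)
    show "eventually (\<lambda>L. L \<ge> (1::nat)) sequentially" by (rule eventually_ge_at_top)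
    show "eventually (\<lambda>L. \<bar>qq L K Sb - \<alpha>0\<bar> < \<epsilon>) sequentially"
      using tendstoD[OF limSb \<epsilon>0] by (simp add: dist_real_def)
    show "eventually (\<lambda>L. \<bar>qq L K {..<N} - 1/2\<bar> < \<epsilon>) sequentially"
      using tendstoD[OF limN \<epsilon>0] by (simp add: dist_real_def)
    have "0 < \<phi>0 - \<gamma>/4 - 0" using \<phi>0 \<beta>0 RS0 by (simp add: \<gamma>_def RSv_def)
    then show "eventually (\<lambda>L. \<phi>0 - \<gamma>/4 - log 2 (real L + 1) / real L > 0) sequentially"
      using order_tendstoD(1)[OF limc] by blast
    have "RSv + \<gamma>/2 < (\<phi>0 - \<gamma>/4 - 0) * (1 - 0)" using \<phi>0 \<gamma>0 by (simp add: \<gamma>_def field_simps)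
    then show "eventually (\<lambda>L. (\<phi>0 - \<gamma>/4 - log 2 (real L + 1) / real L) * (1 - 2 / (\<epsilon>\<^sup>2 * real L)) > RSv + \<gamma>/2) sequentially"
      using order_tendstoD(1)[OF limg] by blast
  qed
  have "ereal (RSv + \<gamma>/2) \<le> liminf (\<lambda>L. ereal (cond_mutual_info (bf_inputs N L K) (\<lambda>x. restrict x S)
            (\<lambda>x. or_output N x) (\<lambda>x. restrict x ({..<N} - S)) / real L))"
  proof (rule Liminf_bounded)
    show "eventually (\<lambda>L. ereal (RSv + \<gamma>/2) \<le> ereal (cond_mutual_info (bf_inputs N L K) (\<lambda>x. restrict x S)
            (\<lambda>x. or_output N x) (\<lambda>x. restrict x ({..<N} - S)) / real L)) sequentially"
      using ev
    proof eventually_elim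
      case (elim L)
      then have L: "L \<ge> 1" and hqS: "\<bar>qq L K Sb - \<alpha>0\<bar> < \<epsilon>" and hqN: "\<bar>qq L K {..<N} - 1/2\<bar> < \<epsilon>"
        and cpos: "\<phi>0 - \<gamma>/4 - log 2 (real L + 1) / real L > 0"
        and gbig: "(\<phi>0 - \<gamma>/4 - log 2 (real L + 1) / real L) * (1 - 2 / (\<epsilon>\<^sup>2 * real L)) > RSv + \<gamma>/2"
        by auto
      define P where "P = bf_inputs N L K"
      define I where "I = cond_mutual_info (bf_inputs N L K) (\<lambda>x. restrict x S) (\<lambda>x. or_output N x) (\<lambda>x. restrict x ({..<N} - S))"
      define v where "v = (\<lambda>x. cnt L Sb x)"
      define u where "u = (\<lambda>x. cnt L {..<N} x)"
      define cL where "cL = real L * (\<phi>0 - \<gamma>/4) - log 2 (real L + 1)"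
      have Lr: "real L > 0" using L by simp
      have cL: "cL = real L * (\<phi>0 - \<gamma>/4 - log 2 (real L + 1) / real L)"
        using Lr by (simp add: cL_def field_simps)
      have cL0: "cL \<ge> 0" using cL cpos Lr by simp
      define B1 where "B1 = {x. \<epsilon> * L \<le> \<bar>real (cnt L Sb x) - L * qq L K Sb\<bar>}"
      define B2 where "B2 = {x. \<epsilon> * L \<le> \<bar>real (cnt L {..<N} x) - L * qq L K {..<N}\<bar>}"
      define G where "G = UNIV - (B1 \<union> B2)"
      have pB1: "measure_pmf.prob P B1 \<le> 1 / (\<epsilon>\<^sup>2 * L)"
        unfolding P_def B1_def by (rule conc[OF L _ \<epsilon>0]) (simp add: Sb_def)
      have pB2: "measure_pmf.prob P B2 \<le> 1 / (\<epsilon>\<^sup>2 * L)"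
        unfolding P_def B2_def by (rule conc[OF L _ \<epsilon>0]) simp
      have pG: "measure_pmf.prob P G \<ge> 1 - 2 / (\<epsilon>\<^sup>2 * L)"
      proof -
        have "measure_pmf.prob P G = 1 - measure_pmf.prob P (B1 \<union> B2)"
          unfolding G_def using measure_pmf.prob_compl[of "B1 \<union> B2" P] by simp
        moreover have "measure_pmf.prob P (B1 \<union> B2) \<le> measure_pmf.prob P B1 + measure_pmf.prob P B2"
          by (rule measure_subadditive) auto
        ultimately show ?thesis using pB1 pB2 by simp
      qed
      have pw: "log 2 (real (v x choose u x)) \<ge> (if x \<in> G then cL else 0)" for x
      proof (cases "x \<in> G")
        case False
        have uvle: "u x \<le> v x" unfolding u_def v_def cnt_def Sb_def by (intro card_mono) auto
        have "0 \<le> log 2 (real (v x choose u x))" using uvle by (subst zero_le_log_cancel_iff) (auto simp: Suc_leI)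
        then show ?thesis using False by simp
      next
        case True
        then have g1: "\<bar>real (v x) - L * qq L K Sb\<bar> < \<epsilon> * L" and g2: "\<bar>real (u x) - L * qq L K {..<N}\<bar> < \<epsilon> * L"
          by (auto simp: G_def B1_def B2_def v_def u_def)
        have hv: "\<bar>real (v x) / L - \<alpha>0\<bar> < 2 * \<epsilon>"
        proof -
          have "\<bar>real (v x) / L - qq L K Sb\<bar> < \<epsilon>"
            using g1 Lr by (simp add: abs_less_iff field_simps)
          then show ?thesis using hqS by linarith
        qed
        have hu: "\<bar>real (u x) / L - 1/2\<bar> < 2 * \<epsilon>"
        proof -
          have "\<bar>real (u x) / L - qq L K {..<N}\<bar> < \<epsilon>"
            using g2 Lr by (simp add: abs_less_iff field_simps)
          then show ?thesis using hqN by linarith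
        qed
        have upos: "real (u x) / L > 0" using hu \<epsilon>8 by linarith
        have uv': "real (u x) / L < real (v x) / L" using hu hv \<epsilon>\<alpha> by linarith
        have u0: "0 < u x" using upos Lr by (simp add: zero_less_divide_iff)
        have uv: "u x < v x" using uv' Lr by (simp add: divide_strict_right_mono_neg) (metis divide_strict_right_mono of_nat_less_iff Lr linorder_not_le order.asym divide_right_mono less_le_not_le)
        have ph: "phi (real (v x) / L) (real (u x) / L) > \<phi>0 - \<gamma>/4"
          using hd hv hu \<epsilon>d by auto
        have id: "real L * phi (real (v x) / L) (real (u x) / L)
            = u x * log 2 (v x / u x) + (v x - u x) * log 2 (v x / (v x - u x))"
        proof -
          have e1: "(real (v x) / L) / (real (u x) / L) = v x / u x" using Lr by simp
          have e2: "real (v x) / L - real (u x) / L = (real (v x) - real (u x)) / L" by (simp add: diff_divide_distrib)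
          have e3: "(real (v x) / L) / ((real (v x) - real (u x)) / L) = real (v x) / (real (v x) - real (u x))" using Lr by simp
          show ?thesis unfolding phi_def e1 e2 e3 using Lr uv by (simp add: of_nat_diff field_simps)
        qed
        have bl: "log 2 (real (v x choose u x)) \<ge> u x * log 2 (v x / u x) + (v x - u x) * log 2 (v x / (v x - u x)) - log 2 (v x + 1)"
          by (rule binom_lower[OF u0 uv])
        have vL: "log 2 (real (v x + 1)) \<le> log 2 (real L + 1)"
          using cnt_le[of L Sb x] by (simp add: v_def)
        have "cL \<le> real L * phi (real (v x) / L) (real (u x) / L) - log 2 (real L + 1)"
          unfolding cL_def using ph Lr by simp
        also have "\<dots> \<le> log 2 (real (v x choose u x))" using bl id vL by linarith
        finally show ?thesis using True by simp
      qed
      have "I \<ge> (\<Sum>x\<in>set_pmf P. pmf P x * log 2 (real (v x choose u x)))"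
        unfolding I_def P_def v_def u_def Sb_def by (rule info_lower[OF L S])
      moreover have "(\<Sum>x\<in>set_pmf P. pmf P x * log 2 (real (v x choose u x))) \<ge> (\<Sum>x\<in>set_pmf P. pmf P x * (if x \<in> G then cL else 0))"
        using pw by (intro sum_mono mult_left_mono) auto
      moreover have "(\<Sum>x\<in>set_pmf P. pmf P x * (if x \<in> G then cL else 0)) = cL * measure_pmf.prob P G"
      proof -
        have "(\<Sum>x\<in>set_pmf P. pmf P x * (if x \<in> G then cL else 0)) = cL * (\<Sum>x\<in>set_pmf P. pmf P x * (if x \<in> G then 1 else 0))"
          by (simp add: sum_distrib_left if_distrib mult.commute cong: if_cong)
        also have "\<dots> = cL * measure_pmf.prob P G"
          using sum_pmf_indicator[OF bf_finite[OF L], of N K G] by (simp add: P_def)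
        finally show ?thesis .
      qed
      moreover have "cL * measure_pmf.prob P G \<ge> cL * (1 - 2 / (\<epsilon>\<^sup>2 * L))"
        using pG cL0 by (intro mult_left_mono) auto
      ultimately have "I \<ge> cL * (1 - 2 / (\<epsilon>\<^sup>2 * L))" by linarith
      then have "I / L \<ge> (\<phi>0 - \<gamma>/4 - log 2 (real L + 1) / real L) * (1 - 2 / (\<epsilon>\<^sup>2 * L))"
        using Lr by (simp add: cL field_simps)
      then have "RSv + \<gamma>/2 \<le> I / L" using gbig by linarith
      then show ?case by (simp add: I_def)
    qed
  qed
  moreover have "ereal RSv < ereal (RSv + \<gamma>/2)" using \<gamma>0 by simp
  ultimately show ?thesis unfolding RSv_def by (meson less_le_trans)
qed



theorem proposition1:
  fixes N :: nat and R :: "nat \<Rightarrow> real"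
  assumes "N \<ge> 1"
    and "\<forall>n<N. R n \<ge> 0"
    and "(\<Sum>n<N. R n) < 1"
  shows "\<exists>\<kappa> :: nat \<Rightarrow> real. (\<forall>n<N. \<kappa> n > 0) \<and>
    (\<forall>K :: nat \<Rightarrow> nat \<Rightarrow> nat.
       (\<forall>n<N. \<forall>L\<ge>1. K n L > 0) \<longrightarrow>
       (\<forall>n<N. ((\<lambda>L. real (K n L) / real L) \<longlongrightarrow> \<kappa> n) sequentially) \<longrightarrow>
       (\<forall>S. S \<noteq> {} \<and> S \<subseteq> {..<N} \<longrightarrow>
          ereal (\<Sum>n\<in>S. R n) <
          liminf (\<lambda>L. ereal (cond_mutual_info (bf_inputs N L K)
                               (\<lambda>x. restrict x S)
                               (\<lambda>x. or_output N x)
                               (\<lambda>x. restrict x ({..<N} - S)) / real L))))"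
proof -
  define \<delta>0 where "\<delta>0 = (1 - (\<Sum>n<N. R n)) / real N"
  have Npos: "real N > 0" using assms(1) by simp
  have \<delta>0: "\<delta>0 > 0" using assms(3) Npos by (simp add: \<delta>0_def)
  define w where "w = (\<lambda>n. R n + \<delta>0)"
  have w0: "\<forall>n<N. w n \<ge> 0" using assms(2) \<delta>0 by (simp add: w_def)
  have w1: "(\<Sum>n<N. w n) = 1" using Npos by (simp add: w_def sum.distrib \<delta>0_def)
  show ?thesis
  proof (rule exI[of _ "\<lambda>n. ln 2 * w n"], intro conjI)
    show "\<forall>n<N. ln 2 * w n > 0"
      using assms(2) \<delta>0 by (simp add: w_def add_nonneg_pos)
    show "\<forall>K :: nat \<Rightarrow> nat \<Rightarrow> nat.
       (\<forall>n<N. \<forall>L\<ge>1. K n L > 0) \<longrightarrow>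
       (\<forall>n<N. ((\<lambda>L. real (K n L) / real L) \<longlongrightarrow> ln 2 * w n) sequentially) \<longrightarrow>
       (\<forall>S. S \<noteq> {} \<and> S \<subseteq> {..<N} \<longrightarrow>
          ereal (\<Sum>n\<in>S. R n) <
          liminf (\<lambda>L. ereal (cond_mutual_info (bf_inputs N L K)
                               (\<lambda>x. restrict x S)
                               (\<lambda>x. or_output N x)
                               (\<lambda>x. restrict x ({..<N} - S)) / real L)))"
    proof (intro allI impI)
      fix K :: "nat \<Rightarrow> nat \<Rightarrow> nat" and S :: "nat set"
      assume Klim: "\<forall>n<N. ((\<lambda>L. real (K n L) / real L) \<longlongrightarrow> ln 2 * w n) sequentially"
        and SS: "S \<noteq> {} \<and> S \<subseteq> {..<N}"
      have S: "S \<subseteq> {..<N}" and Sne: "S \<noteq> {}" using SS by auto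
      have finS: "finite S" using S finite_subset by blast
      have cS: "card S > 0" using finS Sne by (simp add: card_gt_0_iff)
      have sw: "(\<Sum>n\<in>S. w n) = (\<Sum>n\<in>S. R n) + card S * \<delta>0"
        by (simp add: w_def sum.distrib)
      have pos: "card S * \<delta>0 > 0" using cS \<delta>0 by simp
      have RS0: "0 \<le> (\<Sum>n\<in>S. R n)" using assms(2) S by (intro sum_nonneg) auto
      show "ereal (\<Sum>n\<in>S. R n) <
          liminf (\<lambda>L. ereal (cond_mutual_info (bf_inputs N L K)
                               (\<lambda>x. restrict x S)
                               (\<lambda>x. or_output N x)
                               (\<lambda>x. restrict x ({..<N} - S)) / real L))"
      proof (rule main_S[OF S Klim w0 w1])
        show "0 < (\<Sum>n\<in>S. w n)" using sw pos RS0 by linarith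
        show "0 \<le> (\<Sum>n\<in>S. R n)" by (rule RS0)
        show "(\<Sum>n\<in>S. R n) < (\<Sum>n\<in>S. w n)" using sw pos by linarith
      qed
    qed
  qed
qed

end
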